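(* Let $k\ge 1$ and let $G$ be a graph with $\delta(G)\ge k$. Let $S$ be a minimal $k$TDS of $G$ with $|S|=\Gamma_{\times k,t}(G)$, and for each $v\in S$ choose a vertex $v'\in\mathrm{opn}_k(v;S)$ and set $S_v=N_G(v')\cap S$ (a $k$-subset of $S$ containing $v$). Let $L=\bigcap_{v\in S}S_v$ and $\ell=|L|$. If $\ell<k$, then \[ \Gamma_{\times k,t}(G)\le\Gamma_{\times (k-\ell),t}(G)+\ell. \]
   Context: A set $S\subseteq V(G)$ is a $k$-tuple total dominating set ($k$TDS) of a graph $G$ with $\delta(G)\ge k$ if $|N_G(x)\cap S|\ge k$ for every $x\in V(G)$. The upper $k$-tuple total domination number $\Gamma_{\times k,t}(G)$ is the maximum cardinality of a minimal (with respect to inclusion) $k$TDS of $G$. For $v\in S$, a vertex $v'$ is a $k$-open private neighbor of $v$ with respect to $S$ if $v\in N_G(v')$ and $|N_G(v')\cap S|=k$; $\mathrm{opn}_k(v;S)$ is the set of such $v'$ (nonempty for every $v\in S$ when $S$ is a minimal $k$TDS). *)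

theory Defs
  imports Main
begin

definition simple_graph :: "'a set \<Rightarrow> ('a \<Rightarrow> 'a \<Rightarrow> bool) \<Rightarrow> bool" where
  "simple_graph V E \<longleftrightarrow> finite V \<and> (\<forall>x y. E x y \<longrightarrow> x \<in> V \<and> y \<in> V)
     \<and> (\<forall>x y. E x y \<longrightarrow> E y x) \<and> (\<forall>x. \<not> E x x)"

definition nbhd :: "'a set \<Rightarrow> ('a \<Rightarrow> 'a \<Rightarrow> bool) \<Rightarrow> 'a \<Rightarrow> 'a set" where
  "nbhd V E x = {y \<in> V. E x y}"

definition min_degree_ge :: "'a set \<Rightarrow> ('a \<Rightarrow> 'a \<Rightarrow> bool) \<Rightarrow> nat \<Rightarrow> bool" where
  "min_degree_ge V E k \<longleftrightarrow> (\<forall>x\<in>V. k \<le> card (nbhd V E x))"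

definition is_kTDS :: "'a set \<Rightarrow> ('a \<Rightarrow> 'a \<Rightarrow> bool) \<Rightarrow> nat \<Rightarrow> 'a set \<Rightarrow> bool" where
  "is_kTDS V E k S \<longleftrightarrow> S \<subseteq> V \<and> (\<forall>x\<in>V. k \<le> card (nbhd V E x \<inter> S))"

definition minimal_kTDS :: "'a set \<Rightarrow> ('a \<Rightarrow> 'a \<Rightarrow> bool) \<Rightarrow> nat \<Rightarrow> 'a set \<Rightarrow> bool" where
  "minimal_kTDS V E k S \<longleftrightarrow> is_kTDS V E k S \<and> (\<forall>T. T \<subset> S \<longrightarrow> \<not> is_kTDS V E k T)"

definition upper_ktuple_tdom :: "'a set \<Rightarrow> ('a \<Rightarrow> 'a \<Rightarrow> bool) \<Rightarrow> nat \<Rightarrow> nat" where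
  "upper_ktuple_tdom V E k = Max (card ` {S. minimal_kTDS V E k S})"

definition opn :: "'a set \<Rightarrow> ('a \<Rightarrow> 'a \<Rightarrow> bool) \<Rightarrow> nat \<Rightarrow> 'a \<Rightarrow> 'a set \<Rightarrow> 'a set" where
  "opn V E k v S = {v' \<in> V. v \<in> nbhd V E v' \<and> card (nbhd V E v' \<inter> S) = k}"

end

theory Submission
  imports Defs
begin

theorem mainTheorem7:
  fixes V :: "'a set" and E :: "'a \<Rightarrow> 'a \<Rightarrow> bool" and k :: nat
    and S :: "'a set" and pn :: "'a \<Rightarrow> 'a"
  assumes "simple_graph V E"
    and "1 \<le> k"
    and "min_degree_ge V E k"
    and "minimal_kTDS V E k S"
    and "card S = upper_ktuple_tdom V E k"
    and "\<forall>v\<in>S. pn v \<in> opn V E k v S"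
    and "card (\<Inter>v\<in>S. nbhd V E (pn v) \<inter> S) < k"
  shows "upper_ktuple_tdom V E k
           \<le> upper_ktuple_tdom V E (k - card (\<Inter>v\<in>S. nbhd V E (pn v) \<inter> S))
             + card (\<Inter>v\<in>S. nbhd V E (pn v) \<inter> S)"
proof (cases "S = {}")
  case True
  then show ?thesis using assms(5) by simp
next
  case False
  define L where "L = (\<Inter>v\<in>S. nbhd V E (pn v) \<inter> S)"
  have finV: "finite V" using assms(1) by (simp add: simple_graph_def)
  have SV: "S \<subseteq> V" using assms(4) by (simp add: minimal_kTDS_def is_kTDS_def)
  have finS: "finite S" using finV SV finite_subset by blast
  have LS: "L \<subseteq> S" using False unfolding L_def by blast
  have finL: "finite L" using LS finS finite_subset by blast
  have cardS: "card S = card (S - L) + card L"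
    using LS finS by (metis card_Diff_subset finL card_mono le_add_diff_inverse2)
  have lk: "card L < k" using assms(7) L_def by simp
  have nbV: "\<And>x. nbhd V E x \<subseteq> V" by (auto simp: nbhd_def)
  have finnb: "\<And>x A. finite (nbhd V E x \<inter> A)" using finV nbV finite_subset by blast
  have tds: "is_kTDS V E (k - card L) (S - L)"
    unfolding is_kTDS_def
  proof (intro conjI ballI)
    show "S - L \<subseteq> V" using SV by blast
  next
    fix x assume x: "x \<in> V"
    have "k \<le> card (nbhd V E x \<inter> S)" using assms(4) x by (simp add: minimal_kTDS_def is_kTDS_def)
    also have "card (nbhd V E x \<inter> S) \<le> card (nbhd V E x \<inter> (S - L)) + card L"
    proof -
      have "nbhd V E x \<inter> S \<subseteq> (nbhd V E x \<inter> (S - L)) \<union> L" by blast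
      hence "card (nbhd V E x \<inter> S) \<le> card ((nbhd V E x \<inter> (S - L)) \<union> L)"
        using finnb finL by (intro card_mono) auto
      also have "\<dots> \<le> card (nbhd V E x \<inter> (S - L)) + card L" by (rule card_Un_le)
      finally show ?thesis .
    qed
    finally show "k - card L \<le> card (nbhd V E x \<inter> (S - L))" by simp
  qed
  have minl: "minimal_kTDS V E (k - card L) (S - L)"
    unfolding minimal_kTDS_def
  proof (intro conjI allI impI tds)
    fix T assume T: "T \<subset> S - L"
    then obtain v where v: "v \<in> S - L" "v \<notin> T" by blast
    have pv: "pn v \<in> V" "v \<in> nbhd V E (pn v)" "card (nbhd V E (pn v) \<inter> S) = k"
      using assms(6) v(1) by (auto simp: opn_def)
    have Lsub: "L \<subseteq> nbhd V E (pn v) \<inter> S" using v(1) unfolding L_def by blast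
    have eq: "nbhd V E (pn v) \<inter> (S - L) = (nbhd V E (pn v) \<inter> S) - L" by blast
    have c1: "card (nbhd V E (pn v) \<inter> (S - L)) = k - card L"
      using eq Lsub pv(3) finL by (simp add: card_Diff_subset)
    have sub: "nbhd V E (pn v) \<inter> T \<subseteq> (nbhd V E (pn v) \<inter> (S - L)) - {v}" using T v by blast
    have "card (nbhd V E (pn v) \<inter> T) \<le> card ((nbhd V E (pn v) \<inter> (S - L)) - {v})"
      using sub finnb by (intro card_mono) auto
    also have "\<dots> = k - card L - 1" using c1 pv(2) v(1) finnb by (simp add: card_Diff_singleton)
    finally have "card (nbhd V E (pn v) \<inter> T) < k - card L" using lk by linarith
    thus "\<not> is_kTDS V E (k - card L) T" using pv(1) unfolding is_kTDS_def by force
  qed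
  have fin: "finite (card ` {T. minimal_kTDS V E (k - card L) T})"
  proof -
    have "{T. minimal_kTDS V E (k - card L) T} \<subseteq> Pow V"
      by (auto simp: minimal_kTDS_def is_kTDS_def)
    thus ?thesis using finV finite_subset by (metis finite_Pow_iff finite_imageI)
  qed
  have "card (S - L) \<le> upper_ktuple_tdom V E (k - card L)"
    unfolding upper_ktuple_tdom_def using fin minl by (intro Max_ge) auto
  thus ?thesis using cardS assms(5) L_def by simp
qed

end
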